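(* Let $f:[0,1]\to\mathbb{R}$ with $f(0),f(1)\in\mathbb{Z}$. Set $\Phi(x):=6\big(x\ln x+(1-x)\ln(1-x)\big)$. (a) If $f(x)-\Phi(x)$ is convex on $[0,1]$, then $\widetilde{B}_n(f)$ and $\widehat{B}_n(f)$ are convex on $[0,1]$ for all $n\in\mathbb{N}_+$. (b) If $f(x)+\Phi(x)$ is concave on $[0,1]$, then $\widetilde{B}_n(f)$ and $\widehat{B}_n(f)$ are concave on $[0,1]$ for all $n\in\mathbb{N}_+$.
   Context: $\Phi$ is taken with the usual continuous extension $0\ln 0=0$ at $x=0,1$. For $n\in\mathbb{N}_+$ and $f:[0,1]\to\mathbb{R}$, define $\widetilde{B}_n(f)(x):=\sum_{k=0}^n \left[f\left(\frac{k}{n}\right)\binom{n}{k}\right]x^k(1-x)^{n-k}$, where $[\alpha]$ is the largest integer $\le\alpha$, and $\widehat{B}_n(f)(x):=\sum_{k=0}^n \left\langle f\left(\frac{k}{n}\right)\binom{n}{k}\right\rangle x^k(1-x)^{n-k}$, where $\langle\alpha\rangle$ is the integer nearest to $\alpha$ (when $\alpha$ is a half-integer, $\langle\alpha\rangle$ may be either neighbouring integer, chosen arbitrarily; the result holds for any such choice). *)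

theory Defs
  imports "HOL-Analysis.Analysis"
begin

definition xlnx :: "real \<Rightarrow> real" where
  "xlnx x = (if x = 0 then 0 else x * ln x)"

definition Phi :: "real \<Rightarrow> real" where
  "Phi x = 6 * (xlnx x + xlnx (1 - x))"

definition Btilde :: "nat \<Rightarrow> (real \<Rightarrow> real) \<Rightarrow> real \<Rightarrow> real" where
  "Btilde n f x = (\<Sum>k=0..n. real_of_int \<lfloor>f (real k / real n) * real (n choose k)\<rfloor>
                      * x ^ k * (1 - x) ^ (n - k))"

text \<open>z is an integer nearest to a (ties may go either way).\<close>
definition nearest_int :: "real \<Rightarrow> int \<Rightarrow> bool" where
  "nearest_int a z \<longleftrightarrow> \<bar>real_of_int z - a\<bar> \<le> 1/2"

text \<open>Nearest-integer-rounded Bernstein polynomial, for a given choice c of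
  rounded coefficients (c k must be a nearest integer to f(k/n) * (n choose k)).\<close>
definition Bhat :: "nat \<Rightarrow> (nat \<Rightarrow> int) \<Rightarrow> real \<Rightarrow> real" where
  "Bhat n c x = (\<Sum>k=0..n. real_of_int (c k) * x ^ k * (1 - x) ^ (n - k))"

end

theory Submission
  imports Defs
begin

definition P :: "nat \<Rightarrow> (nat \<Rightarrow> real) \<Rightarrow> real \<Rightarrow> real" where
  "P m b x = (\<Sum>k\<le>m. b k * real (m choose k) * x ^ k * (1 - x) ^ (m - k))"

lemma P_rec: "P (Suc m) b x = (1 - x) * P m b x + x * P m (\<lambda>k. b (Suc k)) x"
proof -
  define g where "g k = b k * real (m choose k) * x ^ k * (1 - x) ^ (Suc m - k)" for k
  have "P (Suc m) b x = b 0 * (1-x)^(Suc m) + (\<Sum>i\<le>m. b (Suc i) * real (Suc m choose Suc i) * x ^ Suc i * (1 - x) ^ (m - i))"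
    unfolding P_def by (subst sum.atMost_Suc_shift) simp
  also have "(\<Sum>i\<le>m. b (Suc i) * real (Suc m choose Suc i) * x ^ Suc i * (1 - x) ^ (m - i))
     = x * P m (\<lambda>k. b (Suc k)) x + (\<Sum>i\<le>m. g (Suc i))"
    unfolding P_def g_def sum_distrib_left sum.distrib[symmetric]
    by (rule sum.cong) (auto simp: algebra_simps)
  also have "b 0 * (1-x)^(Suc m) + (x * P m (\<lambda>k. b (Suc k)) x + (\<Sum>i\<le>m. g (Suc i)))
     = (\<Sum>k\<le>Suc m. g k) + x * P m (\<lambda>k. b (Suc k)) x"
    by (subst sum.atMost_Suc_shift) (simp add: g_def)
  also have "(\<Sum>k\<le>Suc m. g k) = (\<Sum>k\<le>m. g k)" by (simp add: g_def)
  also have "(\<Sum>k\<le>m. g k) = (1 - x) * P m b x"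
    unfolding P_def g_def sum_distrib_left
    by (rule sum.cong) (auto simp: Suc_diff_le algebra_simps)
  finally show ?thesis by simp
qed

lemma P_diff: "P m c x - P m b x = P m (\<lambda>k. c k - b k) x"
  unfolding P_def sum_subtractf[symmetric] by (rule sum.cong) (auto simp: algebra_simps)

lemma alg_aux: "(1-x)*A + x*B = (C::real) \<Longrightarrow> E - D = C \<Longrightarrow> -1*D + (1-x)*(m*A) + (1*E + x*(m*B)) = (m+1)*C"
proof -
  assume "(1-x)*A + x*B = (C::real)" "E - D = C"
  moreover have "-1*D + (1-x)*(m*A) + (1*E + x*(m*B)) = (E - D) + m*((1-x)*A + x*B)" by (simp add: algebra_simps)
  ultimately show ?thesis by (simp add: algebra_simps)
qed

lemma P_deriv: "(P m b has_real_derivative (real m * P (m - 1) (\<lambda>k. b (Suc k) - b k) x)) (at x)"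
proof (induction m arbitrary: b)
  case 0
  then show ?case by (simp add: P_def)
next
  case (Suc m)
  have e: "P (Suc m) b = (\<lambda>x. (1 - x) * P m b x + x * P m (\<lambda>k. b (Suc k)) x)"
    by (rule ext) (rule P_rec)
  have d: "((\<lambda>x. (1 - x) * P m b x + x * P m (\<lambda>k. b (Suc k)) x) has_real_derivative
     (-1) * P m b x + (1 - x) * (real m * P (m - 1) (\<lambda>k. b (Suc k) - b k) x)
     + (1 * P m (\<lambda>k. b (Suc k)) x + x * (real m * P (m - 1) (\<lambda>k. b (Suc (Suc k)) - b (Suc k)) x))) (at x)"
  proof -
    have h0: "((\<lambda>x. 1 - x) has_real_derivative -1) (at x)"
      by (auto intro!: derivative_eq_intros)
    have h1: "((\<lambda>x. x) has_real_derivative 1) (at x)" by (rule DERIV_ident)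
    show ?thesis
      by (rule DERIV_cong[OF DERIV_add[OF DERIV_mult[OF h0 Suc.IH[of b]] DERIV_mult[OF h1 Suc.IH[of "\<lambda>k. b (Suc k)"]]]])
        (simp add: algebra_simps)
  qed
  have "(-1) * P m b x + (1 - x) * (real m * P (m - 1) (\<lambda>k. b (Suc k) - b k) x)
     + (1 * P m (\<lambda>k. b (Suc k)) x + x * (real m * P (m - 1) (\<lambda>k. b (Suc (Suc k)) - b (Suc k)) x))
     = real (Suc m) * P m (\<lambda>k. b (Suc k) - b k) x"
  proof (cases m)
    case 0
    then show ?thesis by (simp add: P_def)
  next
    case (Suc m')
    have "(1 - x) * P m' (\<lambda>k. b (Suc k) - b k) x + x * P m' (\<lambda>k. b (Suc (Suc k)) - b (Suc k)) x
       = P m (\<lambda>k. b (Suc k) - b k) x" using Suc P_rec[of m' "\<lambda>k. b (Suc k) - b k" x] by simp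
    moreover have "P m (\<lambda>k. b (Suc k)) x - P m b x = P m (\<lambda>k. b (Suc k) - b k) x" by (rule P_diff)
    ultimately show ?thesis using Suc alg_aux[of x "P m' (\<lambda>k. b (Suc k) - b k) x" "P m' (\<lambda>k. b (Suc (Suc k)) - b (Suc k)) x"
       "P m (\<lambda>k. b (Suc k) - b k) x" "P m (\<lambda>k. b (Suc k)) x" "P m b x" "real m"] by simp
  qed
  with d e show ?case by simp
qed

lemma P_nonneg: "x \<in> {0..1} \<Longrightarrow> (\<And>k. k \<le> m \<Longrightarrow> b k \<ge> 0) \<Longrightarrow> P m b x \<ge> 0"
  unfolding P_def by (intro sum_nonneg mult_nonneg_nonneg) auto

lemma P_convex:
  assumes "\<And>k. k + 2 \<le> m \<Longrightarrow> b k - 2 * b (Suc k) + b (Suc (Suc k)) \<ge> 0"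
  shows "convex_on {0..1} (P m b)"
proof (rule convex_on_realI)
  show "connected {0..1::real}" by simp
  show "(P m b has_real_derivative (real m * P (m - 1) (\<lambda>k. b (Suc k) - b k) x)) (at x)" for x
    by (rule P_deriv)
  fix x y :: real assume xy: "x \<in> {0..1}" "y \<in> {0..1}" "x \<le> y"
  have "P (m - 1) (\<lambda>k. b (Suc k) - b k) x \<le> P (m - 1) (\<lambda>k. b (Suc k) - b k) y"
  proof (rule DERIV_nonneg_imp_nondecreasing[OF xy(3)])
    fix z assume z: "x \<le> z" "z \<le> y"
    have "real (m - 1) * P (m - 1 - 1) (\<lambda>k. (b (Suc (Suc k)) - b (Suc k)) - (b (Suc k) - b k)) z \<ge> 0"
    proof (cases "m \<ge> 2")
      case True
      then show ?thesis
        using z xy assms by (intro mult_nonneg_nonneg P_nonneg) (auto simp: algebra_simps)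
    qed auto
    moreover have "DERIV (P (m - 1) (\<lambda>k. b (Suc k) - b k)) z :> real (m - 1) * P (m - 1 - 1) (\<lambda>k. (b (Suc (Suc k)) - b (Suc k)) - (b (Suc k) - b k)) z"
      using P_deriv[of "m - 1" "\<lambda>k. b (Suc k) - b k" z] by simp
    ultimately show "\<exists>d. DERIV (P (m - 1) (\<lambda>k. b (Suc k) - b k)) z :> d \<and> d \<ge> 0"
      by blast
  qed
  then show "real m * P (m - 1) (\<lambda>k. b (Suc k) - b k) x \<le> real m * P (m - 1) (\<lambda>k. b (Suc k) - b k) y"
    by (simp add: mult_left_mono)
qed

lemma G_nonneg:
  fixes t :: real
  assumes "0 \<le> t" "t < 1"
  shows "0 \<le> ln (1 + t) - ln (1 - t) - 2 * t"
proof -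
  have "ln (1 + 0) - ln (1 - 0) - 2 * 0 \<le> ln (1 + t) - ln (1 - t) - 2 * (t::real)"
  proof (rule DERIV_nonneg_imp_nondecreasing[OF assms(1)])
    fix s :: real assume s: "0 \<le> s" "s \<le> t"
    have d: "DERIV (\<lambda>s. ln (1 + s) - ln (1 - s) - 2 * s) s :> 1 / (1 + s) + 1 / (1 - s) - 2"
    proof -
      have ne: "1 - s \<noteq> 0" "1 + s \<noteq> 0" using s assms by auto
      show ?thesis using s assms by (intro derivative_eq_intros refl) (auto simp: ne)
    qed
    have ne2: "1 - s > 0" "1 + s > 0" using s assms by auto
    have "1 / (1 + s) + 1 / (1 - s) - 2 = 2 * s^2 / ((1 + s) * (1 - s))"
      using ne2 by (simp add: divide_simps) (simp add: algebra_simps power2_eq_square)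
    also have "\<dots> \<ge> 0" using s assms by (intro divide_nonneg_pos mult_pos_pos) auto
    finally show "\<exists>y. DERIV (\<lambda>s. ln (1 + s) - ln (1 - s) - 2 * s) s :> y \<and> y \<ge> 0"
      using d by blast
  qed
  then show ?thesis by simp
qed

lemma psi_bound:
  fixes t :: real
  assumes "0 \<le> t" "t < 1"
  shows "t^2 \<le> (1 - t) * ln (1 - t) + (1 + t) * ln (1 + t)"
proof -
  have "(1 - 0) * ln (1 - 0) + (1 + 0) * ln (1 + 0) - 0^2 \<le> (1 - t) * ln (1 - t) + (1 + t) * ln (1 + t) - (t::real)^2"
  proof (rule DERIV_nonneg_imp_nondecreasing[OF assms(1)])
    fix s :: real assume s: "0 \<le> s" "s \<le> t"
    have d: "DERIV (\<lambda>s. (1 - s) * ln (1 - s) + (1 + s) * ln (1 + s) - s^2) s :> ln (1 + s) - ln (1 - s) - 2 * s"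
    proof -
      have ne: "1 - s > 0" "1 + s > 0" using s assms by auto
      show ?thesis using ne by (auto intro!: derivative_eq_intros simp: divide_simps)
    qed
    show "\<exists>y. DERIV (\<lambda>s. (1 - s) * ln (1 - s) + (1 + s) * ln (1 + s) - s^2) s :> y \<and> y \<ge> 0"
      using d G_nonneg[of s] s assms by auto
  qed
  then show ?thesis by simp
qed

lemma ln2_ge: "ln (2::real) \<ge> 1/2"
proof -
  have "ln (1/2::real) \<le> 1/2 - 1" by (rule ln_le_minus_one) auto
  then show ?thesis by (simp add: ln_div)
qed

lemma xlnx_d2:
  fixes h x :: real
  assumes "0 < h" "h \<le> x"
  shows "h^2 / x \<le> xlnx (x - h) - 2 * xlnx x + xlnx (x + h)"
proof (cases "h = x")
  case True
  have "xlnx (x - h) - 2 * xlnx x + xlnx (x + h) = 2 * x * ln 2"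
    using True assms by (simp add: xlnx_def ln_mult algebra_simps)
  moreover have "h^2 / x = x" using True assms by (simp add: power2_eq_square)
  moreover have "x \<le> 2 * x * ln 2" using ln2_ge assms by (simp add: mult_left_mono[of "1/2" "ln 2" "2*x", simplified])
  ultimately show ?thesis by simp
next
  case False
  define t where "t = h / x"
  have x0: "x > 0" using assms by simp
  have t: "0 \<le> t" "t < 1" using assms False x0 by (auto simp: t_def)
  have e1: "x - h = x * (1 - t)" "x + h = x * (1 + t)" using x0 by (auto simp: t_def field_simps)
  have "xlnx (x - h) - 2 * xlnx x + xlnx (x + h)
     = x * (1 - t) * (ln x + ln (1 - t)) - 2 * x * ln x + x * (1 + t) * (ln x + ln (1 + t))"
    unfolding e1 xlnx_def using x0 t by (simp add: ln_mult)
  also have "\<dots> = x * ((1 - t) * ln (1 - t) + (1 + t) * ln (1 + t))" by (simp add: algebra_simps)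
  also have "\<dots> \<ge> x * t^2" using psi_bound[OF t] x0 by simp
  finally show ?thesis using x0 by (simp add: t_def power2_eq_square)
qed

lemma choose_ge_mono:
  assumes "1 \<le> i" "i \<le> j" "j \<le> n - i" "i \<le> n"
  shows "n choose i \<le> n choose j"
proof (cases "2 * j \<le> n")
  case True then show ?thesis using assms binomial_mono by blast
next
  case False
  have "n choose j = n choose (n - j)" using assms by (intro binomial_symmetric) auto
  moreover have "n choose i \<le> n choose (n - j)" using assms False by (intro binomial_mono) auto
  ultimately show ?thesis by simp
qed

lemma choose_two_real: "real (n choose 2) = real n * (real n - 1) / 2"
proof -
  have "2 * (n choose 2) = n * (n - 1)"
  proof -
    have "even (n * (n - 1))" by (cases "even n") auto
    then show ?thesis unfolding choose_two by (metis dvd_mult_div_cancel)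
  qed
  then have "2 * real (n choose 2) = real n * real (n - 1)" by (metis of_nat_mult of_nat_numeral)
  then show ?thesis by (cases n) auto
qed

lemma choose_ge_n:
  assumes "1 \<le> j" "j + 1 \<le> n"
  shows "real n \<le> real (n choose j)"
  using choose_ge_mono[of 1 j n] assms by simp

lemma choose_ge_2:
  assumes "2 \<le> j" "j + 2 \<le> n"
  shows "real n * (real n - 1) / 2 \<le> real (n choose j)"
proof -
  have "n choose 2 \<le> n choose j" using choose_ge_mono[of 2 j n] assms by simp
  then have "real (n choose 2) \<le> real (n choose j)" by simp
  then show ?thesis using choose_two_real[of n] by simp
qed

lemma Ebound:
  fixes u :: "nat \<Rightarrow> real" and m n :: nat
  assumes m: "1 \<le> m" "m + 1 \<le> n"
    and u0: "u 0 = 0" and un: "u n = 0"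
    and u1: "\<And>j. 1 \<le> j \<Longrightarrow> j + 1 \<le> n \<Longrightarrow> u j \<le> 1 / real n"
    and u2: "\<And>j. 2 \<le> j \<Longrightarrow> j + 2 \<le> n \<Longrightarrow> u j \<le> 2 / (real n * (real n - 1))"
  shows "u (m - 1) + 2 * u m + u (m + 1) \<le> 6 / (real n * real m) + 6 / (real n * real (n - m))"
proof -
  have n2: "real n \<ge> 2" using m by linarith
  have nm: "real (n - m) = real n - real m" using m by simp
  have pos1: "6 / (real n * real m) \<ge> 0" "6 / (real n * real (n - m)) \<ge> 0" by auto
  have ub: "u j \<le> 1 / real n" if jn: "j \<le> n" for j
  proof -
    consider "j = 0" | "j = n" | "1 \<le> j" "j + 1 \<le> n" using jn by fastforce
    then show ?thesis using u0 un u1 n2 by cases auto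
  qed
  consider "m = 1" | "m = n - 1" "m \<ge> 2" | "m = 2" "m + 2 \<le> n" | "m = n - 2" "m \<ge> 3"
    | "m \<ge> 3" "m + 3 \<le> n" using m by linarith
  then show ?thesis
  proof cases
    case 1
    have "u (m - 1) + 2 * u m + u (m + 1) \<le> 3 / real n" using 1 u0 ub[of 1] ub[of "Suc (Suc 0)"] m by auto
    also have "\<dots> \<le> 6 / (real n * real m)" using 1 n2 by (simp add: frac_le)
    finally show ?thesis by (intro add_increasing2[OF pos1(2)])
  next
    case 2
    have "u (m - 1) + 2 * u m + u (m + 1) \<le> 3 / real n" using 2 un ub[of m] ub[of "m - 1"] m
      by (auto simp: Suc_diff_le)
    also have "\<dots> \<le> 6 / (real n * real (n - m))" using 2 m n2 by (simp add: frac_le)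
    finally show ?thesis by (intro add_increasing[OF pos1(1)])
  next
    case 3
    have a: "u (m - 1) + 2 * u m + u (m + 1) \<le> 1 / real n + 2 * (2 / (real n * (real n - 1))) + 1 / real n"
      using 3 ub[of 1] ub[of 3] u2[of 2] m by auto
    have b: "4 / (real n * (real n - 1)) \<le> 6 / (real n * real (n - m))"
      using 3 n2 m nm by (intro frac_le) (auto intro!: mult_left_mono)
    have c: "2 / real n \<le> 6 / (real n * real m)" using 3 n2 by (simp add: frac_le)
    show ?thesis using a b c by simp
  next
    case 4
    have a: "u (m - 1) + 2 * u m + u (m + 1) \<le> 1 / real n + 2 * (2 / (real n * (real n - 1))) + 1 / real n"
    proof -
      have "m + 2 \<le> n" using 4 m by linarith
      then have "u m \<le> 2 / (real n * (real n - 1))" using u2[of m] 4 by simp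
      then show ?thesis using 4 ub[of "m - 1"] ub[of "m + 1"] m by simp
    qed
    have b: "4 / (real n * (real n - 1)) \<le> 6 / (real n * real m)"
      using 4 n2 m by (intro frac_le) (auto intro!: mult_left_mono)
    have c: "2 / real n \<le> 6 / (real n * real (n - m))" using 4 n2 m by (simp add: frac_le)
    show ?thesis using a b c by simp
  next
    case 5
    have a: "u (m - 1) + 2 * u m + u (m + 1) \<le> 8 / (real n * (real n - 1))"
    proof -
      have "2 \<le> m - 1" "m - 1 + 2 \<le> n" using 5 by auto
      then have "u (m - 1) \<le> 2 / (real n * (real n - 1))" by (rule u2)
      moreover have "u m \<le> 2 / (real n * (real n - 1))" "u (m + 1) \<le> 2 / (real n * (real n - 1))"
        using 5 u2[of m] u2[of "m + 1"] by auto
      ultimately show ?thesis by simp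
    qed
    have "2 * m \<le> n \<or> 2 * (n - m) \<le> n" by linarith
    then have "8 / (real n * (real n - 1)) \<le> 6 / (real n * real m) \<or> 8 / (real n * (real n - 1)) \<le> 6 / (real n * real (n - m))"
    proof
      assume h: "2 * m \<le> n"
      then have "2 * real m \<le> real n" "real n \<ge> 6" using 5 by linarith+
      then have "8 * real m \<le> 6 * (real n - 1)" by (simp add: algebra_simps)
      then show ?thesis using 5 n2
        by (intro disjI1) (simp add: divide_simps mult_ac) 
    next
      assume h: "2 * (n - m) \<le> n"
      then have "2 * real (n - m) \<le> real n" "real n \<ge> 6" using 5 by linarith+
      then have "8 * real (n - m) \<le> 6 * (real n - 1)" by (simp add: algebra_simps)
      then show ?thesis using 5 n2
        by (intro disjI2) (simp add: divide_simps mult_ac)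
    qed
    then show ?thesis using a pos1 add_increasing add_increasing2 by (meson order_trans)
  qed
qed

lemma ubounds:
  fixes e :: "nat \<Rightarrow> real"
  assumes e: "\<And>k. k \<le> n \<Longrightarrow> \<bar>e k\<bar> \<le> 1"
  shows "\<And>j. 1 \<le> j \<Longrightarrow> j + 1 \<le> n \<Longrightarrow> \<bar>e j\<bar> / real (n choose j) \<le> 1 / real n"
    and "\<And>j. 2 \<le> j \<Longrightarrow> j + 2 \<le> n \<Longrightarrow> \<bar>e j\<bar> / real (n choose j) \<le> 2 / (real n * (real n - 1))"
proof -
  fix j assume j: "1 \<le> j" "j + 1 \<le> n"
  have c: "real n \<le> real (n choose j)" by (rule choose_ge_n[OF j])
  have "\<bar>e j\<bar> / real (n choose j) \<le> 1 / real (n choose j)"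
    using e[of j] j c by (intro divide_right_mono) auto
  also have "\<dots> \<le> 1 / real n" using c j by (intro divide_left_mono) auto
  finally show "\<bar>e j\<bar> / real (n choose j) \<le> 1 / real n" .
next
  fix j assume j: "2 \<le> j" "j + 2 \<le> n"
  have c: "real n * (real n - 1) / 2 \<le> real (n choose j)" by (rule choose_ge_2[OF j])
  have p: "real n * (real n - 1) / 2 > 0" using j by auto
  have cp: "real (n choose j) > 0" using c p by linarith
  have "\<bar>e j\<bar> / real (n choose j) \<le> 1 / real (n choose j)"
    using e[of j] j c p by (intro divide_right_mono) auto
  also have "\<dots> \<le> 1 / (real n * (real n - 1) / 2)" using c p cp by (intro divide_left_mono mult_pos_pos) auto
  finally show "\<bar>e j\<bar> / real (n choose j) \<le> 2 / (real n * (real n - 1))" by simp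
qed

lemma fin_aux: "B = G0 - 2*G1 + G2 - A0 + 2*A1 - A2 \<Longrightarrow> G1 - F1 \<le> (1-1/2)*(G0-F0) + 1/2*(G2-F2)
  \<Longrightarrow> R \<le> F0 - 2*F1 + F2 \<Longrightarrow> U0 + 2*U1 + U2 \<le> R \<Longrightarrow> -U0 \<le> -A0 \<Longrightarrow> -U1 \<le> A1
  \<Longrightarrow> -U2 \<le> -A2 \<Longrightarrow> (0::real) \<le> B" by (simp add: field_simps)

lemma main_convex:
  fixes g :: "real \<Rightarrow> real" and a e :: "nat \<Rightarrow> real" and n :: nat
  assumes n: "n \<ge> 1"
    and cv: "convex_on {0..1} (\<lambda>x. g x - Phi x)"
    and a: "\<And>k. k \<le> n \<Longrightarrow> a k = g (real k / real n) * real (n choose k) - e k"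
    and e: "\<And>k. k \<le> n \<Longrightarrow> \<bar>e k\<bar> \<le> 1" and e0: "e 0 = 0" and en: "e n = 0"
  shows "convex_on {0..1} (\<lambda>x. \<Sum>k=0..n. a k * x ^ k * (1 - x) ^ (n - k))"
proof -
  define b where "b k = a k / real (n choose k)" for k
  have eq: "(\<lambda>x. \<Sum>k=0..n. a k * x ^ k * (1 - x) ^ (n - k)) = P n b"
    by (rule ext) (auto simp: P_def b_def atLeast0AtMost intro!: sum.cong)
  have bk: "b k = g (real k / real n) - e k / real (n choose k)" if "k \<le> n" for k
    using a[OF that] that by (simp add: b_def field_simps)
  show ?thesis unfolding eq
  proof (rule P_convex)
    fix k assume k: "k + 2 \<le> n"
    define m where "m = Suc k"
    have m: "1 \<le> m" "m + 1 \<le> n" using k by (auto simp: m_def)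
    have n0: "real n > 0" using n by simp
    define x0 x1 x2 where "x0 = real k / real n" and "x1 = real m / real n" and "x2 = real (Suc m) / real n"
    have xs: "x0 \<in> {0..1}" "x2 \<in> {0..1}" using k n0 by (auto simp: x0_def x2_def m_def field_simps)
    have mid: "(1 - 1/2) *\<^sub>R x0 + (1/2) *\<^sub>R x2 = x1"
      using n0 by (simp add: x0_def x1_def x2_def m_def field_simps)
    have c: "g x1 - Phi x1 \<le> (1 - 1/2) * (g x0 - Phi x0) + (1/2) * (g x2 - Phi x2)"
      using convex_onD[OF cv, of "1/2" x0 x2] xs mid by simp
    have p1: "(1 / real n)^2 / x1 \<le> xlnx (x1 - 1 / real n) - 2 * xlnx x1 + xlnx (x1 + 1 / real n)"
      using m n0 by (intro xlnx_d2) (auto simp: x1_def field_simps)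
    have p1': "(1 / real n)^2 / x1 = 1 / (real n * real m)" using m n0 by (simp add: x1_def power2_eq_square)
    have e01: "x1 - 1 / real n = x0" "x1 + 1 / real n = x2"
      using n0 by (auto simp: x0_def x1_def x2_def m_def field_simps)
    define y where "y = real (n - m) / real n"
    have p2: "(1 / real n)^2 / y \<le> xlnx (y - 1 / real n) - 2 * xlnx y + xlnx (y + 1 / real n)"
      using m n0 by (intro xlnx_d2) (auto simp: y_def field_simps)
    have p2': "(1 / real n)^2 / y = 1 / (real n * real (n - m))" using m n0 by (simp add: y_def power2_eq_square)
    have e02: "y - 1 / real n = 1 - x2" "y = 1 - x1" "y + 1 / real n = 1 - x0"
      using n0 m by (auto simp: x0_def x1_def x2_def y_def m_def of_nat_diff field_simps)
    have q1: "1 / (real n * real m) \<le> xlnx x0 - 2 * xlnx x1 + xlnx x2"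
      using p1 unfolding p1' e01 .
    have q2a: "1 / (real n * real (n - m)) \<le> xlnx (y - 1 / real n) - 2 * xlnx y + xlnx (y + 1 / real n)"
      using p2 unfolding p2' .
    have q2: "1 / (real n * real (n - m)) \<le> xlnx (1 - x2) - 2 * xlnx (1 - x1) + xlnx (1 - x0)"
      using q2a by (simp only: e02(1) e02(3), simp only: e02(2))
    have phi: "6 / (real n * real m) + 6 / (real n * real (n - m)) \<le> Phi x0 - 2 * Phi x1 + Phi x2"
      using q1 q2 unfolding Phi_def by (simp add: algebra_simps)
    define u where "u j = \<bar>e j\<bar> / real (n choose j)" for j
    have E: "u (m - 1) + 2 * u m + u (m + 1) \<le> 6 / (real n * real m) + 6 / (real n * real (n - m))"
      by (rule Ebound[OF m]) (use e0 en ubounds[OF e] in \<open>auto simp: u_def\<close>)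
    have t1: "- (e k / real (n choose k)) \<ge> - u (m - 1)" by (simp add: u_def m_def divide_right_mono)
    have t2: "e m / real (n choose m) \<ge> - u m"
    proof -
      have "- \<bar>e m\<bar> / real (n choose m) \<le> e m / real (n choose m)"
        by (intro divide_right_mono) auto
      then show ?thesis by (simp add: u_def)
    qed
    have t3: "- (e (Suc m) / real (n choose (Suc m))) \<ge> - u (m + 1)" by (simp add: u_def divide_right_mono)
    have "b k - 2 * b (Suc k) + b (Suc (Suc k)) =
      (g x0 - 2 * g x1 + g x2) - e k / real (n choose k) + 2 * (e m / real (n choose m)) - e (Suc m) / real (n choose (Suc m))"
      using bk[of k] bk[of m] bk[of "Suc m"] m k by (simp add: x0_def x1_def x2_def m_def)
    then show "b k - 2 * b (Suc k) + b (Suc (Suc k)) \<ge> 0"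
      by (rule fin_aux[OF _ c phi E[unfolded Suc_eq_plus1[symmetric]] t1 t2 t3[unfolded Suc_eq_plus1[symmetric]]])
  qed
qed

lemma wrap:
  fixes g :: "real \<Rightarrow> real" and \<alpha> :: "nat \<Rightarrow> int" and n :: nat
  assumes n: "n \<ge> 1" and cv: "convex_on {0..1} (\<lambda>x. g x - Phi x)"
    and g0: "g 0 \<in> \<int>" and g1: "g 1 \<in> \<int>"
    and al: "\<And>k. k \<le> n \<Longrightarrow> \<bar>real_of_int (\<alpha> k) - g (real k / real n) * real (n choose k)\<bar> < 1"
  shows "convex_on {0..1} (\<lambda>x. \<Sum>k=0..n. real_of_int (\<alpha> k) * x ^ k * (1 - x) ^ (n - k))"
proof (rule main_convex[OF n cv, where e = "\<lambda>k. g (real k / real n) * real (n choose k) - real_of_int (\<alpha> k)"])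
  show "\<And>k. k \<le> n \<Longrightarrow> real_of_int (\<alpha> k) = g (real k / real n) * real (n choose k) - (g (real k / real n) * real (n choose k) - real_of_int (\<alpha> k))"
    by simp
  show "\<And>k. k \<le> n \<Longrightarrow> \<bar>g (real k / real n) * real (n choose k) - real_of_int (\<alpha> k)\<bar> \<le> 1"
    using al by (simp add: abs_minus_commute less_imp_le)
  obtain z where z: "g 0 = real_of_int z" using g0 Ints_cases by blast
  have "\<bar>real_of_int (\<alpha> 0) - real_of_int z\<bar> < 1" using al[of 0] z by simp
  then have "\<bar>\<alpha> 0 - z\<bar> < 1" by linarith
  then have "\<alpha> 0 = z" by linarith
  then show "g (real 0 / real n) * real (n choose 0) - real_of_int (\<alpha> 0) = 0" using z by simp
  obtain w where w: "g 1 = real_of_int w" using g1 Ints_cases by blast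
  have nn: "real n / real n = 1" using n by simp
  have "\<bar>real_of_int (\<alpha> n) - real_of_int w\<bar> < 1" using al[of n] w nn by simp
  then have "\<bar>\<alpha> n - w\<bar> < 1" by linarith
  then have "\<alpha> n = w" by linarith
  then show "g (real n / real n) * real (n choose n) - real_of_int (\<alpha> n) = 0" using w nn by simp
qed

lemma floor_close: "\<bar>real_of_int \<lfloor>y\<rfloor> - y\<bar> < 1"
  using floor_correct[of y] by linarith

lemma neg_sum_eq: "(\<lambda>x. - (\<Sum>k=0..n. real_of_int (\<alpha> k) * x ^ k * (1 - x) ^ (n - k)))
  = (\<lambda>x. \<Sum>k=0..n. real_of_int (- \<alpha> k) * x ^ k * (1 - x) ^ (n - k))"
  by (rule ext) (simp add: sum_negf[symmetric])

theorem theorem1p9: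
  fixes f :: "real \<Rightarrow> real"
  assumes "f 0 \<in> \<int>" and "f 1 \<in> \<int>"
  shows "(convex_on {0..1} (\<lambda>x. f x - Phi x) \<longrightarrow>
            (\<forall>n::nat. n \<ge> 1 \<longrightarrow>
               convex_on {0..1} (Btilde n f) \<and>
               (\<forall>c. (\<forall>k\<le>n. nearest_int (f (real k / real n) * real (n choose k)) (c k))
                     \<longrightarrow> convex_on {0..1} (Bhat n c))))
       \<and> (concave_on {0..1} (\<lambda>x. f x + Phi x) \<longrightarrow>
            (\<forall>n::nat. n \<ge> 1 \<longrightarrow>
               concave_on {0..1} (Btilde n f) \<and>
               (\<forall>c. (\<forall>k\<le>n. nearest_int (f (real k / real n) * real (n choose k)) (c k))
                     \<longrightarrow> concave_on {0..1} (Bhat n c))))"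
proof (intro conjI impI allI)
  fix n :: nat assume cv: "convex_on {0..1} (\<lambda>x. f x - Phi x)" and n: "n \<ge> 1"
  have "convex_on {0..1} (\<lambda>x. \<Sum>k=0..n. real_of_int \<lfloor>f (real k / real n) * real (n choose k)\<rfloor> * x ^ k * (1 - x) ^ (n - k))"
    by (rule wrap[OF n cv assms]) (rule floor_close)
  then show "convex_on {0..1} (Btilde n f)" by (simp add: Btilde_def[abs_def])
  fix c assume c: "\<forall>k\<le>n. nearest_int (f (real k / real n) * real (n choose k)) (c k)"
  have "convex_on {0..1} (\<lambda>x. \<Sum>k=0..n. real_of_int (c k) * x ^ k * (1 - x) ^ (n - k))"
    by (rule wrap[OF n cv assms]) (use c in \<open>auto simp: nearest_int_def\<close>)
  then show "convex_on {0..1} (Bhat n c)" by (simp add: Bhat_def[abs_def])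
next
  fix n :: nat assume cc: "concave_on {0..1} (\<lambda>x. f x + Phi x)" and n: "n \<ge> 1"
  have cv: "convex_on {0..1} (\<lambda>x. (\<lambda>x. - f x) x - Phi x)"
  proof -
    have "(\<lambda>x. (\<lambda>x. - f x) x - Phi x) = (\<lambda>x. - (f x + Phi x))" by (rule ext) simp
    then show ?thesis using cc by (simp only: concave_on_def)
  qed
  have g0: "(\<lambda>x. - f x) 0 \<in> \<int>" "(\<lambda>x. - f x) 1 \<in> \<int>" using assms by auto
  have "convex_on {0..1} (\<lambda>x. \<Sum>k=0..n. real_of_int (- \<lfloor>f (real k / real n) * real (n choose k)\<rfloor>) * x ^ k * (1 - x) ^ (n - k))"
    by (rule wrap[OF n cv g0]) (use floor_close in \<open>auto simp: abs_minus_commute\<close>)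
  then show "concave_on {0..1} (Btilde n f)"
    unfolding concave_on_def neg_sum_eq[symmetric] by (simp add: Btilde_def[abs_def])
  fix c assume c: "\<forall>k\<le>n. nearest_int (f (real k / real n) * real (n choose k)) (c k)"
  have "convex_on {0..1} (\<lambda>x. \<Sum>k=0..n. real_of_int (- c k) * x ^ k * (1 - x) ^ (n - k))"
  proof (rule wrap[OF n cv g0])
    fix k assume k: "k \<le> n"
    have "\<bar>real_of_int (c k) - f (real k / real n) * real (n choose k)\<bar> \<le> 1/2"
      using c k by (simp add: nearest_int_def)
    then show "\<bar>real_of_int (- c k) - (- f (real k / real n)) * real (n choose k)\<bar> < 1"
      by (simp add: abs_minus_commute)
  qed
  then show "concave_on {0..1} (Bhat n c)"
    unfolding concave_on_def neg_sum_eq[symmetric] by (simp add: Bhat_def[abs_def])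
qed

end
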